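(* For every $\delta > 0$ there exist win-lose bimatrix games in which no pair of mixed strategies $(\mathbf{p}, \mathbf{q})$ with $|\mathrm{supp}(\mathbf{p})| \le 2$ and $|\mathrm{supp}(\mathbf{q})| \le 2$ is a $(1-\delta)$-well-supported Nash equilibrium.
   Context: A bimatrix game is given by two $m \times n$ payoff matrices $A$ (row player) and $B$ (column player); it is win-lose if all entries lie in $\{0,1\}$. A pair of mixed strategies $(\mathbf{p}, \mathbf{q})$ is an $\epsilon$-well-supported Nash equilibrium if every row $i$ in the support of $\mathbf{p}$ satisfies $\mathbf{e}_i^T A \mathbf{q} \ge \max_\ell \mathbf{e}_\ell^T A \mathbf{q} - \epsilon$, and every column $j$ in the support of $\mathbf{q}$ satisfies $\mathbf{p}^T B \mathbf{e}_j \ge \max_\ell \mathbf{p}^T B \mathbf{e}_\ell - \epsilon$. $\mathrm{supp}$ denotes the set of pure strategies played with positive probability. *)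

theory Defs
  imports Complex_Main
begin

text \<open>An m x n bimatrix game: payoff matrices A (row player), B (column player),
  represented as functions nat => nat => real, relevant on indices i < m, j < n.\<close>

definition win_lose :: "nat \<Rightarrow> nat \<Rightarrow> (nat \<Rightarrow> nat \<Rightarrow> real) \<Rightarrow> bool" where
  "win_lose m n A \<longleftrightarrow> (\<forall>i<m. \<forall>j<n. A i j \<in> {0, 1})"

definition mixed_strategy :: "nat \<Rightarrow> (nat \<Rightarrow> real) \<Rightarrow> bool" where
  "mixed_strategy k p \<longleftrightarrow> (\<forall>i<k. 0 \<le> p i) \<and> (\<forall>i\<ge>k. p i = 0) \<and> (\<Sum>i<k. p i) = 1"

definition supp :: "nat \<Rightarrow> (nat \<Rightarrow> real) \<Rightarrow> nat set" where
  "supp k p = {i. i < k \<and> p i > 0}"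

definition row_payoff :: "nat \<Rightarrow> (nat \<Rightarrow> nat \<Rightarrow> real) \<Rightarrow> (nat \<Rightarrow> real) \<Rightarrow> nat \<Rightarrow> real" where
  "row_payoff n A q i = (\<Sum>j<n. A i j * q j)"

definition col_payoff :: "nat \<Rightarrow> (nat \<Rightarrow> nat \<Rightarrow> real) \<Rightarrow> (nat \<Rightarrow> real) \<Rightarrow> nat \<Rightarrow> real" where
  "col_payoff m B p j = (\<Sum>i<m. p i * B i j)"

definition well_supported_NE ::
  "real \<Rightarrow> nat \<Rightarrow> nat \<Rightarrow> (nat \<Rightarrow> nat \<Rightarrow> real) \<Rightarrow> (nat \<Rightarrow> nat \<Rightarrow> real)
    \<Rightarrow> (nat \<Rightarrow> real) \<Rightarrow> (nat \<Rightarrow> real) \<Rightarrow> bool" where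
  "well_supported_NE \<epsilon> m n A B p q \<longleftrightarrow>
     mixed_strategy m p \<and> mixed_strategy n q \<and>
     (\<forall>i\<in>supp m p. \<forall>l<m. row_payoff n A q i \<ge> row_payoff n A q l - \<epsilon>) \<and>
     (\<forall>j\<in>supp n q. \<forall>l<n. col_payoff m B p j \<ge> col_payoff m B p l - \<epsilon>)"

end

theory Submission
  imports Defs
begin

definition qb :: "int \<Rightarrow> bool" where
  "qb t = bit (61808106872519771730::int) (nat (t mod 67))"

definition covs :: "int list list" where
  "covs = [[3, 8, 28, 31, 13], [3, 8, 28, 31, 13], [13, 32, 43, 46, 52], [8, 31, 44, 45, 51], [3, 12, 31, 46, 32, 52], [8, 12, 13, 32, 43], [8, 13, 58, 44, 52], [3, 12, 45, 52, 51, 58], [13, 28, 51, 42, 46], [3, 8, 52, 53, 43], [12, 13, 42, 28, 51], [13, 31, 42, 52, 43, 45], [3, 8, 42, 32, 43], [3, 12, 31, 58, 43], [8, 13, 42, 58, 32], [28, 42, 46, 58, 43], [12, 28, 46, 58, 43], [3, 8, 28, 13, 44, 58], [3, 8, 45, 52, 12], [3, 13, 46, 31, 32, 51], [3, 28, 31, 32, 51], [12, 28, 32, 51, 52], [3, 8, 42, 13, 12, 53], [8, 13, 28, 31, 43, 51], [3, 8, 42, 32, 44], [3, 8, 28, 43, 32], [3, 12, 31, 46, 58], [3, 8, 45, 58, 12], [3, 12, 13, 31, 46], [3, 8, 28, 31, 13], [8, 13, 42, 58, 32], [8, 12, 42, 44, 51], [3, 8, 28, 31, 13], [8, 12, 32,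 46, 45], [8, 12, 13, 42, 28], [12, 13, 42, 31, 43], [3, 12, 13, 32, 43, 44], [8, 12, 13, 42, 28], [3, 12, 13, 45, 46], [3, 13, 46, 42, 44, 51], [3, 31, 51, 42, 43], [8, 12, 31, 44, 46], [3, 13, 28, 44, 32], [3, 8, 28, 42, 45], [8, 28, 43, 46, 51], [8, 12, 31, 44, 28], [13, 31, 42, 51, 32, 58], [8, 12, 31, 46, 32], [8, 12, 13, 32, 42], [12, 13, 28, 32, 45], [3, 13, 28, 31, 44], [12, 28, 32, 45, 42, 58], [3, 12, 13, 31, 28], [13, 28, 31, 43, 32, 52], [28, 31, 44, 53, 32], [8, 31, 32, 58, 46], [31, 32, 42, 52, 58], [3, 8, 28, 31, 32], [3, 32, 42, 44, 43], [3, 12, 45, 58, 43], [13, 31, 43, 45, 44, 51], [12, 28, 32, 45, 44], [3, 8, 45, 52, 43], [3, 8, 28, 42, 44], [8, 28, 31, 43, 42, 45], [3, 28, 32, 43, 44], [12, 31, 42, 45, 51]]"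

lemma qb_cong: "a mod 67 = b mod 67 \<Longrightarrow> qb a = qb b"
  by (simp add: qb_def)

lemma res_all:
  assumes "list_all P [0..66::int]"
  shows "P (t mod 67)"
proof -
  have "t mod 67 \<in> set [0..66]" by simp
  then show ?thesis using assms by (simp add: list_all_iff)
qed

lemma qb_0: "\<not> qb 0"
  by (simp add: qb_def)

lemma qb_1: "qb 1"
  by (simp add: qb_def)

lemma chk_neg: "list_all (\<lambda>r. qb r \<longrightarrow> \<not> qb (- r)) [0..66::int]"
  by code_simp

lemma qb_neg: assumes "qb t" shows "\<not> qb (- t)"
proof -
  have "qb (t mod 67) \<longrightarrow> \<not> qb (- (t mod 67))" using res_all[OF chk_neg] .
  moreover have "qb (t mod 67) = qb t" by (rule qb_cong) simp
  moreover have "qb (- (t mod 67)) = qb (- t)" by (rule qb_cong) (simp add: mod_minus_eq)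
  ultimately show ?thesis using assms by simp
qed

lemma chk_mult: "list_all (\<lambda>a. list_all (\<lambda>b. qb a \<longrightarrow> qb b \<longrightarrow> qb (a * b)) [0..66::int]) [0..66::int]"
  by code_simp

lemma qb_mult: assumes "qb a" "qb b" shows "qb (a * b)"
proof -
  have "list_all (\<lambda>b. qb (a mod 67) \<longrightarrow> qb b \<longrightarrow> qb ((a mod 67) * b)) [0..66::int]"
    using res_all[OF chk_mult, of a] .
  then have "qb (a mod 67) \<longrightarrow> qb (b mod 67) \<longrightarrow> qb ((a mod 67) * (b mod 67))"
    using res_all[of "\<lambda>b. qb (a mod 67) \<longrightarrow> qb b \<longrightarrow> qb ((a mod 67) * b)"] by blast
  moreover have "qb (a mod 67) = qb a" "qb (b mod 67) = qb b" by (rule qb_cong, simp)+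
  moreover have "qb ((a mod 67) * (b mod 67)) = qb (a * b)" by (rule qb_cong) (simp add: mod_mult_eq)
  ultimately show ?thesis using assms by simp
qed

lemma chk_tri: "list_all (\<lambda>r. r \<noteq> 0 \<longrightarrow> qb r \<or> qb (- r)) [0..66::int]"
  by code_simp

lemma qb_tri: assumes "t mod 67 \<noteq> 0" shows "qb t \<or> qb (- t)"
proof -
  have "t mod 67 \<noteq> 0 \<longrightarrow> qb (t mod 67) \<or> qb (- (t mod 67))" using res_all[OF chk_tri] .
  moreover have "qb (t mod 67) = qb t" by (rule qb_cong) simp
  moreover have "qb (- (t mod 67)) = qb (- t)" by (rule qb_cong) (simp add: mod_minus_eq)
  ultimately show ?thesis using assms by simp
qed

lemma chk_inv: "list_all (\<lambda>r. qb r \<longrightarrow> list_ex (\<lambda>b. (r * b) mod 67 = 1) [0..66::int]) [0..66::int]"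
  by code_simp

lemma qb_inv: assumes "qb a" shows "\<exists>b. (a * b) mod 67 = 1"
proof -
  have "qb (a mod 67) \<longrightarrow> list_ex (\<lambda>b. ((a mod 67) * b) mod 67 = 1) [0..66::int]"
    using res_all[OF chk_inv] .
  moreover have "qb (a mod 67) = qb a" by (rule qb_cong) simp
  ultimately obtain b where "((a mod 67) * b) mod 67 = 1" using assms by (auto simp: list_ex_iff)
  then have "(a * b) mod 67 = 1" by (simp add: mod_mult_left_eq)
  then show ?thesis by blast
qed

lemma chk_dom: "list_all (\<lambda>(u,zs). list_all (\<lambda>v. list_ex (\<lambda>z. qb (- z) \<and> qb (1 - z) \<and> qb (u - z) \<and> qb (v - z)) zs) [0..66::int]) (zip [0..66::int] covs)"
  unfolding covs_def by code_simp


lemma dom01: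
  assumes "0 \<le> u" "u \<le> 66" "0 \<le> v" "v \<le> 66"
  shows "\<exists>z. qb (- z) \<and> qb (1 - z) \<and> qb (u - z) \<and> qb (v - z)"
proof -
  have len: "length covs = 67" by (simp add: covs_def)
  have lz: "length (zip [0..66::int] covs) = 67" by (simp add: len)
  have n: "nat u < 67" using assms by simp
  have "\<forall>k<length (zip [0..66::int] covs). (\<lambda>(u,zs). list_all (\<lambda>v. list_ex (\<lambda>z. qb (- z) \<and> qb (1 - z) \<and> qb (u - z) \<and> qb (v - z)) zs) [0..66::int]) (zip [0..66::int] covs ! k)"
    using chk_dom by (simp only: list_all_length)
  then have "(\<lambda>(u,zs). list_all (\<lambda>v. list_ex (\<lambda>z. qb (- z) \<and> qb (1 - z) \<and> qb (u - z) \<and> qb (v - z)) zs) [0..66::int]) (zip [0..66::int] covs ! nat u)"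
    using n lz by (metis (no_types, lifting))
  moreover have "zip [0..66::int] covs ! nat u = (u, covs ! nat u)"
    using n len assms by (simp add: nth_zip nth_upto)
  ultimately have "list_all (\<lambda>v. list_ex (\<lambda>z. qb (- z) \<and> qb (1 - z) \<and> qb (u - z) \<and> qb (v - z)) (covs ! nat u)) [0..66::int]"
    by simp
  moreover have "v \<in> set [0..66::int]" using assms by simp
  ultimately show ?thesis by (auto simp: list_all_iff list_ex_iff)
qed

lemma dom2: "\<exists>z. qb (- z) \<and> qb (1 - z) \<and> qb (u - z) \<and> qb (v - z)"
proof -
  obtain z where z: "qb (- z)" "qb (1 - z)" "qb (u mod 67 - z)" "qb (v mod 67 - z)"
  proof -
    have "u mod 67 < 67" "v mod 67 < 67" by simp_all
    then have "u mod 67 \<le> 66" "v mod 67 \<le> 66" by linarith+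
    moreover have "0 \<le> u mod 67" "0 \<le> v mod 67" by simp_all
    ultimately show ?thesis using dom01[of "u mod 67" "v mod 67"] that by blast
  qed
  have "qb (u mod 67 - z) = qb (u - z)" by (rule qb_cong) (simp add: mod_diff_left_eq)
  moreover have "qb (v mod 67 - z) = qb (v - z)" by (rule qb_cong) (simp add: mod_diff_left_eq)
  ultimately show ?thesis using z by blast
qed

lemma domA:
  assumes a: "qb a"
  shows "\<exists>w. qb (x1 - w) \<and> qb (x1 + a - w) \<and> qb (x3 - w) \<and> qb (x4 - w)"
proof -
  obtain b where b: "(a * b) mod 67 = 1" using qb_inv[OF a] by blast
  obtain z where z: "qb (- z)" "qb (1 - z)" "qb (b * (x3 - x1) - z)" "qb (b * (x4 - x1) - z)"
    using dom2 by blast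
  define w where "w = x1 + a * z"
  have "qb (a * (- z))" using qb_mult[OF a z(1)] .
  moreover have "x1 - w = a * (- z)" by (simp add: w_def)
  ultimately have 1: "qb (x1 - w)" by simp
  have "qb (a * (1 - z))" using qb_mult[OF a z(2)] .
  moreover have "x1 + a - w = a * (1 - z)" by (simp add: w_def algebra_simps)
  ultimately have 2: "qb (x1 + a - w)" by simp
  have key: "qb (a * (b * (d - x1) - z)) = qb (d - w)" for d
  proof (rule qb_cong)
    have e1: "a * (b * (d - x1) - z) = (a * b) * (d - x1) - a * z" by (simp add: algebra_simps)
    have "((a * b) * (d - x1)) mod 67 = (((a * b) mod 67) * (d - x1)) mod 67"
      by (simp add: mod_mult_left_eq)
    also have "\<dots> = (d - x1) mod 67" using b by simp
    finally have "((a * b) * (d - x1) - a * z) mod 67 = ((d - x1) - a * z) mod 67"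
      using mod_diff_cong by blast
    then show "(a * (b * (d - x1) - z)) mod 67 = (d - w) mod 67"
      using e1 by (simp add: w_def algebra_simps)
  qed
  have 3: "qb (x3 - w)" using qb_mult[OF a z(3)] key[of x3] by simp
  have 4: "qb (x4 - w)" using qb_mult[OF a z(4)] key[of x4] by simp
  show ?thesis using 1 2 3 4 by blast
qed

lemma dom4: "\<exists>w. qb (x1 - w) \<and> qb (x2 - w) \<and> qb (x3 - w) \<and> qb (x4 - w)"
proof (cases "qb (x2 - x1)")
  case True
  then show ?thesis using domA[OF True, of x1 x3 x4] by simp
next
  case F1: False
  show ?thesis
  proof (cases "qb (x1 - x2)")
    case True
    then show ?thesis using domA[OF True, of x2 x3 x4] by auto
  next
    case False
    have "(x2 - x1) mod 67 = 0"
    proof (rule ccontr)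
      assume "(x2 - x1) mod 67 \<noteq> 0"
      then have "qb (x2 - x1) \<or> qb (- (x2 - x1))" by (rule qb_tri)
      then show False using F1 False by simp
    qed
    then have eq: "qb (x2 - w) = qb (x1 - w)" for w
      by (intro qb_cong) (simp add: mod_eq_dvd_iff dvd_eq_mod_eq_0)
    obtain w where "qb (x1 - w)" "qb (x3 - w)" "qb (x4 - w)"
      using domA[OF qb_1, of x1 x3 x4] by blast
    then show ?thesis using eq by blast
  qed
qed

definition beats :: "nat \<Rightarrow> nat \<Rightarrow> bool" where
  "beats x y \<longleftrightarrow> qb (int y - int x)"

lemma beats_irrefl: "\<not> beats x x"
  by (simp add: beats_def qb_0)

lemma beats_asym: "beats x y \<Longrightarrow> \<not> beats y x"
  unfolding beats_def using qb_neg[of "int y - int x"] by simp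

lemma beats_dom:
  fixes y1 y2 y3 y4 :: nat
  shows "\<exists>r<67. beats r y1 \<and> beats r y2 \<and> beats r y3 \<and> beats r y4"
proof -
  obtain w where w: "qb (int y1 - w)" "qb (int y2 - w)" "qb (int y3 - w)" "qb (int y4 - w)"
    using dom4 by blast
  define r where "r = nat (w mod 67)"
  have r: "int r = w mod 67" by (simp add: r_def)
  have "r < 67" by (simp add: r_def)
  moreover have "beats r y = qb (int y - w)" for y
    unfolding beats_def r by (rule qb_cong) (simp add: mod_diff_right_eq)
  ultimately show ?thesis using w by blast
qed

lemma card_le2:
  assumes "finite X" "card X \<le> 2" "X \<noteq> {}"
  shows "\<exists>a b. a \<in> X \<and> b \<in> X \<and> X \<subseteq> {a, b}"
proof -
  have "card X \<noteq> 0" using assms by simp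
  then have "card X = 1 \<or> card X = 2" using assms(2) by linarith
  then show ?thesis
  proof
    assume "card X = 1"
    then obtain a where "X = {a}" by (auto simp: card_Suc_eq)
    then show ?thesis by auto
  next
    assume "card X = 2"
    then obtain a b where "X = {a, b}" by (auto simp: card_Suc_eq numeral_2_eq_2)
    then show ?thesis by auto
  qed
qed

definition GA :: "nat \<Rightarrow> nat \<Rightarrow> real" where
  "GA i j = (if beats i (j div 67) \<and> beats i (j mod 67) then 1 else 0)"

definition GB :: "nat \<Rightarrow> nat \<Rightarrow> real" where
  "GB i j = (if i = j div 67 \<or> i = j mod 67 then 1 else 0)"

lemma supp_finite: "finite (supp k p)"
  unfolding supp_def by simp

lemma supp_ne:
  assumes "mixed_strategy k p" shows "supp k p \<noteq> {}"
proof
  assume e: "supp k p = {}"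
  have "\<forall>i<k. p i = 0"
  proof (intro allI impI)
    fix i assume "i < k"
    then have "0 \<le> p i" "\<not> p i > 0" using assms e by (auto simp: mixed_strategy_def supp_def)
    then show "p i = 0" by simp
  qed
  then have "(\<Sum>i<k. p i) = 0" by simp
  then show False using assms by (simp add: mixed_strategy_def)
qed

lemma sum_support:
  fixes f :: "nat \<Rightarrow> real"
  assumes "mixed_strategy k p" "\<And>i. i \<in> supp k p \<Longrightarrow> f i = 1"
  shows "(\<Sum>i<k. p i * f i) = 1"
proof -
  have "(\<Sum>i<k. p i * f i) = (\<Sum>i<k. p i)"
  proof (rule sum.cong)
    fix i assume "i \<in> {..<k}"
    then have i: "i < k" by simp
    show "p i * f i = p i"
    proof (cases "p i > 0")
      case True then have "i \<in> supp k p" using i by (simp add: supp_def)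
      then show ?thesis using assms(2) by simp
    next
      case False then have "p i = 0" using assms(1) i by (auto simp: mixed_strategy_def)
      then show ?thesis by simp
    qed
  qed simp
  then show ?thesis using assms(1) by (simp add: mixed_strategy_def)
qed

lemma pos_term:
  fixes g :: "nat \<Rightarrow> real"
  assumes "(\<Sum>i<k. g i) > 0"
  shows "\<exists>i<k. g i \<noteq> 0"
proof (rule ccontr)
  assume "\<not> ?thesis"
  then have "(\<Sum>i<k. g i) = 0" by simp
  then show False using assms by simp
qed

theorem theorem2:
  fixes \<delta> :: real
  assumes "\<delta> > 0"
  shows "\<exists>m n A B. m \<ge> 1 \<and> n \<ge> 1 \<and> win_lose m n A \<and> win_lose m n B \<and>
           (\<forall>p q. mixed_strategy m p \<and> mixed_strategy n q \<and>
                  card (supp m p) \<le> 2 \<and> card (supp n q) \<le> 2 \<longrightarrow>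
                  \<not> well_supported_NE (1 - \<delta>) m n A B p q)"
proof (intro exI conjI allI impI)
  show "(1::nat) \<le> 67" "(1::nat) \<le> 4489" by simp_all
  show "win_lose 67 4489 GA" "win_lose 67 4489 GB" by (simp_all add: win_lose_def GA_def GB_def)
  fix p q
  assume H: "mixed_strategy 67 p \<and> mixed_strategy 4489 q \<and> card (supp 67 p) \<le> 2 \<and> card (supp 4489 q) \<le> 2"
  then have mp: "mixed_strategy 67 p" and mq: "mixed_strategy 4489 q"
    and cp: "card (supp 67 p) \<le> 2" and cq: "card (supp 4489 q) \<le> 2" by auto
  show "\<not> well_supported_NE (1 - \<delta>) 67 4489 GA GB p q"
  proof
    assume W: "well_supported_NE (1 - \<delta>) 67 4489 GA GB p q"
    then have WR: "\<And>i l. i \<in> supp 67 p \<Longrightarrow> l < 67 \<Longrightarrow> row_payoff 4489 GA q i \<ge> row_payoff 4489 GA q l - (1 - \<delta>)"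
      and WC: "\<And>j l. j \<in> supp 4489 q \<Longrightarrow> l < 4489 \<Longrightarrow> col_payoff 67 GB p j \<ge> col_payoff 67 GB p l - (1 - \<delta>)"
      unfolding well_supported_NE_def by auto
    obtain c1 c2 where c: "c1 \<in> supp 4489 q" "c2 \<in> supp 4489 q" "supp 4489 q \<subseteq> {c1, c2}"
      using card_le2[OF supp_finite cq supp_ne[OF mq]] by blast
    obtain a1 a2 where a: "a1 \<in> supp 67 p" "a2 \<in> supp 67 p" "supp 67 p \<subseteq> {a1, a2}"
      using card_le2[OF supp_finite cp supp_ne[OF mp]] by blast
    obtain r where r: "r < 67" "beats r (c1 div 67)" "beats r (c1 mod 67)" "beats r (c2 div 67)" "beats r (c2 mod 67)"
      using beats_dom by blast
    have rowr: "row_payoff 4489 GA q r = 1"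
    proof -
      have "(\<Sum>j<4489. q j * GA r j) = 1"
      proof (rule sum_support[OF mq])
        fix j assume "j \<in> supp 4489 q"
        then have "j = c1 \<or> j = c2" using c by auto
        then show "GA r j = 1" using r by (auto simp: GA_def)
      qed
      then show ?thesis by (simp add: row_payoff_def mult.commute)
    qed
    have a1l: "a1 < 67" "a2 < 67" using a by (auto simp: supp_def)
    define c0 where "c0 = a1 * 67 + a2"
    have c0: "c0 < 4489" "c0 div 67 = a1" "c0 mod 67 = a2" using a1l by (auto simp: c0_def)
    have colc0: "col_payoff 67 GB p c0 = 1"
    proof -
      have "(\<Sum>i<67. p i * GB i c0) = 1"
      proof (rule sum_support[OF mp])
        fix i assume "i \<in> supp 67 p"
        then have "i = a1 \<or> i = a2" using a by auto
        then show "GB i c0 = 1" using c0 by (auto simp: GB_def)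
      qed
      then show ?thesis by (simp add: col_payoff_def)
    qed
    have step: "\<exists>i'\<in>supp 67 p. beats i i'" if i: "i \<in> supp 67 p" for i
    proof -
      have "row_payoff 4489 GA q i \<ge> \<delta>" using WR[OF i r(1)] rowr by simp
      then have "(\<Sum>j<4489. GA i j * q j) > 0" using assms by (simp add: row_payoff_def)
      then obtain j where j: "j < 4489" "GA i j * q j \<noteq> 0" using pos_term by blast
      then have ga: "beats i (j div 67)" "beats i (j mod 67)" by (auto simp: GA_def split: if_splits)
      have "q j \<noteq> 0" using j by auto
      moreover have "q j \<ge> 0" using mq j by (simp add: mixed_strategy_def)
      ultimately have js: "j \<in> supp 4489 q" using j by (simp add: supp_def)
      have "col_payoff 67 GB p j \<ge> \<delta>" using WC[OF js c0(1)] colc0 by simp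
      then have "(\<Sum>i<67. p i * GB i j) > 0" using assms by (simp add: col_payoff_def)
      then obtain i' where i': "i' < 67" "p i' * GB i' j \<noteq> 0" using pos_term by blast
      then have gb: "i' = j div 67 \<or> i' = j mod 67" by (auto simp: GB_def split: if_splits)
      have "p i' \<noteq> 0" using i' by auto
      moreover have "p i' \<ge> 0" using mp i' by (simp add: mixed_strategy_def)
      ultimately have "i' \<in> supp 67 p" using i' by (simp add: supp_def)
      moreover have "beats i i'" using gb ga by auto
      ultimately show ?thesis by blast
    qed
    obtain i2 where i2: "i2 \<in> supp 67 p" "beats a1 i2" using step[OF a(1)] by blast
    obtain i3 where i3: "i3 \<in> supp 67 p" "beats i2 i3" using step[OF i2(1)] by blast
    have "a1 \<noteq> i2" "i2 \<noteq> i3" using i2 i3 beats_irrefl by metis+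
    then have "i3 = a1" using a(3) i2(1) i3(1) by auto
    then show False using i2 i3 beats_asym by blast
  qed
qed

end
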